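(* Let $X=\mathrm{tv}(b_0,\dots,b_l)$ be a smooth complete toric surface with $b_0<0$ and $l>2$, with rays $\rho_0,\dots,\rho_l$ as below. Let $\alpha$ be the unique index with $1<\alpha<l$ such that $\rho_\alpha=-\rho_0$ (equivalently, the continued fraction $[b_1,\dots,b_{\alpha-1}]$ is well defined and equals $0$), and put $\gamma=\sum_{i=1}^{\alpha-1}(3-b_i)-3$. Then $\gamma\ge0$, $b_0+b_\alpha-\gamma\ge0$, and for every $R\in(\mathbb Z^2)^*$ with $\langle\rho_\alpha,R\rangle=1$ one has $\langle\rho_{\alpha-1},R\rangle-\langle\rho_1,R\rangle=\gamma$.
   Context: For integers $b_0,\dots,b_l$, $\mathrm{tv}(b_0,\dots,b_l)$ denotes the smooth complete toric surface whose fan in $\mathbb Z^2\otimes\mathbb Q$ has rays with primitive generators $\rho_0,\dots,\rho_l$ in cyclic order (indices mod $l+1$), satisfying $b_i\rho_i=\rho_{i-1}+\rho_{i+1}$; equivalently, $-b_i$ is the self-intersection number of the invariant prime divisor corresponding to $\rho_i$. The continued fraction is defined by $[c_k]=c_k$ and $[c_1,\dots,c_k]=c_1-1/[c_2,\dots,c_k]$ when no division by zero occurs. *)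

theory Defs
  imports Complex_Main
begin

text \<open>Lattice vectors of \<open>\<int>\<^sup>2\<close> and dual vectors in \<open>(\<int>\<^sup>2)\<^sup>*\<close> are both
  represented as pairs of integers; the duality pairing is the dot product.\<close>

type_synonym lvec = "int \<times> int"

definition pairing :: "lvec \<Rightarrow> lvec \<Rightarrow> int" where
  "pairing v R = fst v * fst R + snd v * snd R"

definition det2 :: "lvec \<Rightarrow> lvec \<Rightarrow> int" where
  "det2 u v = fst u * snd v - snd u * fst v"

definition primitive :: "lvec \<Rightarrow> bool" where
  "primitive v \<longleftrightarrow> gcd (fst v) (snd v) = 1"

definition smul :: "int \<Rightarrow> lvec \<Rightarrow> lvec" where
  "smul c v = (c * fst v, c * snd v)"

definition vadd :: "lvec \<Rightarrow> lvec \<Rightarrow> lvec" where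
  "vadd u v = (fst u + fst v, snd u + snd v)"

definition vneg :: "lvec \<Rightarrow> lvec" where
  "vneg v = (- fst v, - snd v)"

text \<open>\<open>\<rho> 0, \<dots>, \<rho> l\<close> are the primitive ray generators of a smooth complete fan in
  \<open>\<int>\<^sup>2 \<otimes> \<rat>\<close>, listed in (counterclockwise) cyclic order, going around the origin
  exactly once: their arguments strictly increase within one full turn, and
  consecutive rays (indices mod l+1) span the two-dimensional smooth cones.\<close>
definition smooth_complete_fan :: "nat \<Rightarrow> (nat \<Rightarrow> lvec) \<Rightarrow> bool" where
  "smooth_complete_fan l \<rho> \<longleftrightarrow>
     (\<forall>i\<le>l. primitive (\<rho> i)) \<and>
     (\<forall>i\<le>l. det2 (\<rho> i) (\<rho> ((i + 1) mod (l + 1))) = 1) \<and>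
     (\<exists>\<theta> :: nat \<Rightarrow> real.
        (\<forall>i<l. \<theta> i < \<theta> (Suc i)) \<and> \<theta> l < \<theta> 0 + 2 * pi \<and>
        (\<forall>i\<le>l. \<exists>r>0. real_of_int (fst (\<rho> i)) = r * cos (\<theta> i) \<and>
                        real_of_int (snd (\<rho> i)) = r * sin (\<theta> i)))"

text \<open>\<open>\<rho>\<close> is the ray data of \<open>tv(b 0, \<dots>, b l)\<close>:
  \<open>b i \<rho> i = \<rho> (i-1) + \<rho> (i+1)\<close>, indices mod l+1.\<close>
definition is_tv_fan :: "nat \<Rightarrow> (nat \<Rightarrow> int) \<Rightarrow> (nat \<Rightarrow> lvec) \<Rightarrow> bool" where
  "is_tv_fan l b \<rho> \<longleftrightarrow> smooth_complete_fan l \<rho> \<and>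
     (\<forall>i\<le>l. smul (b i) (\<rho> i) = vadd (\<rho> ((i + l) mod (l + 1))) (\<rho> ((i + 1) mod (l + 1))))"

end

theory Submission
  imports Defs
begin


lemma blow:
  assumes "det2 u v = 1" "det2 v w = 1"
  shows "fst u + fst w = det2 u w * fst v" "snd u + snd w = det2 u w * snd v"
proof -
  have "det2 v w * fst u + det2 u v * fst w = det2 u w * fst v"
       "det2 v w * snd u + det2 u v * snd w = det2 u w * snd v"
    by (simp_all add: det2_def algebra_simps)
  thus "fst u + fst w = det2 u w * fst v" "snd u + snd w = det2 u w * snd v"
    using assms by simp_all
qed

lemma hj_sum:
  assumes "n \<ge> 2" "\<forall>j<n. det2 (v j) (v (Suc j)) = 1"
    "\<forall>j. 0<j \<longrightarrow> j<n \<longrightarrow> det2 (v 0) (v j) > 0" "v n = vneg (v 0)"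
  shows "(\<Sum>j<n-1. 3 - det2 (v j) (v (j+2))) = 3 + det2 (v 1) (v (n-1))"
  using assms
proof (induction n arbitrary: v rule: less_induct)
  case (less n)
  note H = less.prems
  show ?case
  proof (cases "n = 2")
    case True
    then show ?thesis using H(4) by (simp add: det2_def vneg_def numeral_2_eq_2)
  next
    case False
    hence n3: "n \<ge> 3" using H(1) by simp
    define y where "y j = det2 (v 0) (v j)" for j
    have yn: "y n = 0" using H(4) by (simp add: y_def det2_def vneg_def)
    have y0: "y 0 = 0" by (simp add: y_def det2_def)
    have ypos: "\<And>j. 0 < j \<Longrightarrow> j < n \<Longrightarrow> y j > 0" using H(3) y_def by simp
    define Y where "Y = Max (y ` {1..n-1})"
    have Yge: "\<And>j. 1 \<le> j \<Longrightarrow> j \<le> n-1 \<Longrightarrow> y j \<le> Y" unfolding Y_def by simp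
    have "Y \<in> y ` {1..n-1}" unfolding Y_def using n3 by (intro Max_in) auto
    then obtain i0 where i0: "1 \<le> i0" "i0 \<le> n-1" "y i0 = Y" by auto
    define i where "i = (LEAST j. 1 \<le> j \<and> j \<le> n-1 \<and> y j = Y)"
    have i: "1 \<le> i" "i \<le> n-1" "y i = Y"
      using LeastI[of "\<lambda>j. 1 \<le> j \<and> j \<le> n-1 \<and> y j = Y" i0] i0 unfolding i_def by auto
    have ilt: "\<And>j. 1 \<le> j \<Longrightarrow> j < i \<Longrightarrow> y j < Y"
    proof -
      fix j assume "1 \<le> j" "j < i"
      hence "\<not> (1 \<le> j \<and> j \<le> n-1 \<and> y j = Y)" using not_less_Least[of j] unfolding i_def by blast
      with \<open>1 \<le> j\<close> \<open>j < i\<close> i Yge show "y j < Y" by force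
    qed
    have Ypos: "Y > 0" using ypos[of i] i by simp
    define B where "B = det2 (v (i-1)) (v (i+1))"
    have d1: "det2 (v (i-1)) (v i) = 1" using H(2) i by (metis Suc_diff_1 less_le_trans less_one not_le diff_less zero_less_one le_less_trans n3 less_imp_diff_less)
    have d2: "det2 (v i) (v (i+1)) = 1" using H(2) i n3 by simp
    have bl: "fst (v (i-1)) + fst (v (i+1)) = B * fst (v i)" "snd (v (i-1)) + snd (v (i+1)) = B * snd (v i)"
      using blow[OF d1 d2] B_def by auto
    have yB: "y (i-1) + y (i+1) = B * y i"
    proof -
      have "y (i-1) + y (i+1) = fst (v 0) * (snd (v (i-1)) + snd (v (i+1))) - snd (v 0) * (fst (v (i-1)) + fst (v (i+1)))"
        by (simp add: y_def det2_def algebra_simps)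
      also have "\<dots> = fst (v 0) * (B * snd (v i)) - snd (v 0) * (B * fst (v i))" by (simp only: bl)
      also have "\<dots> = B * y i" by (simp add: y_def det2_def algebra_simps)
      finally show ?thesis .
    qed
    have a1: "y (i-1) < Y"
    proof (cases "i = 1")
      case True thus ?thesis using y0 Ypos by simp
    next
      case False thus ?thesis using ilt[of "i-1"] i by simp
    qed
    have a2: "y (i+1) \<le> Y"
    proof (cases "i + 1 = n")
      case True thus ?thesis using yn Ypos by simp
    next
      case False thus ?thesis using Yge[of "i+1"] i by simp
    qed
    have a3: "y (i-1) + y (i+1) > 0"
    proof (cases "i = 1")
      case True thus ?thesis using ypos[of 2] y0 n3 by (simp add: numeral_2_eq_2)
    next
      case False
      have "y (i-1) > 0" using ypos[of "i-1"] False i by simp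
      moreover have "y (i+1) \<ge> 0" using ypos[of "i+1"] yn i by (cases "i+1 = n") (auto, linarith)
      ultimately show ?thesis by simp
    qed
    have p1: "B * Y > 0" using yB a3 i by auto
    have p2: "B * Y < 2 * Y" using yB a1 a2 i by auto
    have "B > 0" using p1 Ypos by (simp add: zero_less_mult_iff)
    moreover have "B < 2" using p2 Ypos by (simp add: mult_less_cancel_right)
    ultimately
    have B1: "B = 1" by simp

    have vi1: "fst (v (i+1)) = fst (v i) - fst (v (i-1))" "snd (v (i+1)) = snd (v i) - snd (v (i-1))"
      using bl B1 by simp_all
    define w where "w j = (if j < i then v j else v (Suc j))" for j
    have w0: "w 0 = v 0" using i by (simp add: w_def)
    have IH: "(\<Sum>j<(n-1)-1. 3 - det2 (w j) (w (j+2))) = 3 + det2 (w 1) (w ((n-1)-1))"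
    proof (rule less.IH)
      show "n - 1 < n" "2 \<le> n - 1" using n3 by auto
      show "\<forall>j<n - 1. det2 (w j) (w (Suc j)) = 1"
      proof (intro allI impI)
        fix j assume j: "j < n - 1"
        consider "Suc j < i" | "Suc j = i" | "j \<ge> i" by linarith
        thus "det2 (w j) (w (Suc j)) = 1"
        proof cases
          case 1 thus ?thesis using H(2) j by (simp add: w_def)
        next
          case 2 hence "j = i - 1" by simp thus ?thesis using B1 B_def 2 by (simp add: w_def)
        next
          case 3 thus ?thesis using H(2) j by (simp add: w_def)
        qed
      qed
      show "\<forall>j. 0 < j \<longrightarrow> j < n - 1 \<longrightarrow> 0 < det2 (w 0) (w j)"
        using H(3) w0 by (auto simp: w_def)
      show "w (n - 1) = vneg (w 0)" using H(4) w0 i n3 by (simp add: w_def)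
    qed
    define F where "F u j = 3 - det2 (u j) (u (j+2))" for u :: "nat \<Rightarrow> lvec" and j
    define phi where "phi j = (if j < i - 1 then j else Suc j)" for j
    define c1 where "c1 j = (if i \<ge> 2 \<and> j = i - 2 then 1 else 0::int)" for j
    define c2 where "c2 j = (if j = i - 1 then 1 else 0::int)" for j
    have pw: "F w j = F v (phi j) + c1 j + c2 j" if j: "j < n - 2" for j
    proof -
      consider "j + 2 < i" | "i \<ge> 2" "j = i - 2" | "j = i - 1" | "j \<ge> i" by linarith
      thus ?thesis
      proof cases
        case 1
        hence "phi j = j" "c1 j = 0" "c2 j = 0" "w j = v j" "w (j+2) = v (j+2)"
          using i(1) by (auto simp: phi_def c1_def c2_def w_def)
        thus ?thesis by (simp add: F_def)
      next
        case 2
        then obtain k where k: "i = k + 2" "j = k" by (metis add.commute le_add_diff_inverse)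
        have d: "det2 (v k) (v (k+1)) = 1" using H(2) k i by simp
        have e: "fst (v (Suc (Suc (Suc k)))) = fst (v (Suc (Suc k))) - fst (v (Suc k))"
          "snd (v (Suc (Suc (Suc k)))) = snd (v (Suc (Suc k))) - snd (v (Suc k))"
          using vi1 k by (simp_all add: numeral_3_eq_3)
        have "det2 (v k) (v (k+3)) = det2 (v k) (v (k+2)) - det2 (v k) (v (k+1))"
          unfolding det2_def numeral_3_eq_3 numeral_2_eq_2 by (simp add: e algebra_simps)
        thus ?thesis using k d by (simp add: F_def w_def phi_def c1_def c2_def numeral_3_eq_3 numeral_2_eq_2)
      next
        case 3
        then obtain k where k: "i = k + 1" "j = k" using i by (metis Suc_diff_1 Suc_eq_plus1 less_le_trans zero_less_one)
        have d: "det2 (v (k+2)) (v (k+3)) = 1" using H(2) k j by (simp add: numeral_3_eq_3 numeral_2_eq_2)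
        have vk: "fst (v k) = fst (v (Suc k)) - fst (v (Suc (Suc k)))" "snd (v k) = snd (v (Suc k)) - snd (v (Suc (Suc k)))"
          using vi1 k by (simp_all add: numeral_2_eq_2)
        have "det2 (v k) (v (k+3)) = det2 (v (k+1)) (v (k+3)) - det2 (v (k+2)) (v (k+3))"
          unfolding det2_def numeral_3_eq_3 numeral_2_eq_2 by (simp add: vk algebra_simps)
        moreover have "\<not>(i \<ge> 2 \<and> j = i - 2)" using 3 i(1) by arith
        hence "c1 j = 0" by (simp add: c1_def)
        ultimately show ?thesis using k d by (simp add: F_def w_def phi_def c2_def numeral_3_eq_3 numeral_2_eq_2)
      next
        case 4
        hence "phi j = j + 1" "c1 j = 0" "c2 j = 0" "w j = v (j+1)" "w (j+2) = v (j+1+2)"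
          using i(1) by (auto simp: phi_def c1_def c2_def w_def)
        thus ?thesis by (simp add: F_def)
      qed
    qed
    have s1: "(\<Sum>j<n-2. F w j) = (\<Sum>j<n-2. F v (phi j)) + (\<Sum>j<n-2. c1 j) + (\<Sum>j<n-2. c2 j)"
      using pw by (simp add: sum.distrib)
    have injphi: "inj_on phi {..<n-2}" unfolding inj_on_def phi_def by auto
    have imphi: "phi ` {..<n-2} = {..<n-1} - {i-1}"
    proof
      show "phi ` {..<n-2} \<subseteq> {..<n-1} - {i-1}" using i by (auto simp: phi_def)
      show "{..<n-1} - {i-1} \<subseteq> phi ` {..<n-2}"
      proof
        fix k assume k: "k \<in> {..<n-1} - {i-1}"
        show "k \<in> phi ` {..<n-2}"
        proof (cases "k < i - 1")
          case True thus ?thesis using k i by (intro image_eqI[of _ _ k]) (auto simp: phi_def)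
        next
          case False thus ?thesis using k i by (intro image_eqI[of _ _ "k - 1"]) (auto simp: phi_def)
        qed
      qed
    qed
    have s2: "(\<Sum>j<n-2. F v (phi j)) = (\<Sum>k\<in>{..<n-1} - {i-1}. F v k)"
      using sum.reindex[OF injphi, of "F v"] imphi by (simp add: comp_def)
    have s3: "(\<Sum>k<n-1. F v k) = F v (i-1) + (\<Sum>k\<in>{..<n-1} - {i-1}. F v k)"
      using i by (intro sum.remove) auto
    have Fi: "F v (i-1) = 2" using B1 B_def i by (simp add: F_def)
    have s4: "(\<Sum>j<n-2. c1 j) = (if i \<ge> 2 then 1 else 0)"
      unfolding c1_def using i by (cases "i \<ge> 2") auto
    have s5: "(\<Sum>j<n-2. c2 j) = (if i - 1 < n - 2 then 1 else 0)"
      unfolding c2_def by simp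
    have main: "(\<Sum>k<n-1. F v k) = 3 + det2 (w 1) (w (n-2)) + 2 - (if i \<ge> 2 then 1 else 0) - (if i - 1 < n - 2 then 1 else 0)"
      using IH s1 s2 s3 s4 s5 Fi unfolding F_def by (simp add: numeral_2_eq_2)
    have dn: "det2 (v 0) (v (n-1)) = 1"
    proof -
      have "det2 (v (n-1)) (v n) = 1" using H(2)[rule_format, of "n-1"] n3 by simp
      thus ?thesis using H(4) by (simp add: det2_def vneg_def algebra_simps)
    qed
    have "det2 (w 1) (w (n-2)) + 2 - (if i \<ge> 2 then 1 else 0) - (if i - 1 < n - 2 then 1 else 0) = det2 (v 1) (v (n-1))"
    proof -
      consider "i \<ge> 2" "i \<le> n - 2" | "i = 1" | "i = n - 1" using i n3 by linarith
      thus ?thesis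
      proof cases
        case 1
        have sn: "Suc (n-2) = n-1" using n3 by simp
        hence "w 1 = v 1" "w (n-2) = v (n-1)" "i - 1 < n - 2" using n3 1 by (auto simp: w_def)
        thus ?thesis using 1 by simp
      next
        case 2
        have e: "fst (v 2) = fst (v 1) - fst (v 0)" "snd (v 2) = snd (v 1) - snd (v 0)" using vi1 2 by (simp_all add: numeral_2_eq_2)
        have "det2 (v 2) (v (n-1)) = det2 (v 1) (v (n-1)) - det2 (v 0) (v (n-1))" unfolding det2_def e by (simp add: algebra_simps)
        moreover have "Suc (n-2) = n-1" using n3 by simp
        hence "w 1 = v 2" "w (n-2) = v (n-1)" "i - 1 < n - 2" using 2 n3 by (auto simp: w_def numeral_2_eq_2)
        ultimately show ?thesis using 2 n3 dn by simp
      next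
        case 3
        have e: "i - 1 = n - 2" "i + 1 = n" using 3 n3 by auto
        have "fst (v (n-2)) = fst (v (n-1)) + fst (v 0)" "snd (v (n-2)) = snd (v (n-1)) + snd (v 0)"
          using bl B1 e 3 H(4) by (simp_all add: vneg_def)
        moreover have "det2 (v 0) (v 1) = 1" using H(2) n3 by simp
        ultimately have "det2 (v 1) (v (n-2)) = det2 (v 1) (v (n-1)) - 1" by (simp add: det2_def algebra_simps)
        moreover have "w 1 = v 1" "w (n-2) = v (n-2)" "\<not> i - 1 < n - 2" "i \<ge> 2" using 3 n3 by (auto simp: w_def)
        ultimately show ?thesis by simp
      qed
    qed
    with main show ?thesis unfolding F_def by simp
  qed
qed


lemma key: fixes a c X Y Z :: lvec assumes "det2 a c = 1" "det2 a X = -1" "det2 a Y = -1" "det2 a Z = 1"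
  shows "det2 X c + det2 Z Y - det2 c Z = det2 Y X"
  using assms unfolding det2_def by algebra
lemma key2: fixes a c Z R :: lvec assumes "det2 a c = 1" "det2 a Z = 1" "pairing a R = -1"
  shows "pairing Z R - pairing c R = det2 c Z"
  using assms unfolding det2_def pairing_def by algebra


lemma bdet: assumes "smul c u = vadd p q" "det2 p u = 1" shows "c = det2 p q"
proof -
  have "c = c * det2 p u" using assms(2) by simp
  also have "\<dots> = det2 p (smul c u)" by (simp add: det2_def smul_def algebra_simps)
  also have "\<dots> = det2 p q" using assms(1) by (simp add: det2_def vadd_def algebra_simps)
  finally show ?thesis .
qed

lemma modl: "1 \<le> (i::nat) \<Longrightarrow> i \<le> l \<Longrightarrow> (i + l) mod (l + 1) = i - 1"
proof -
  assume "1 \<le> i" "i \<le> l"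
  hence "i + l = (i - 1) + (l + 1)" by arith
  hence "(i + l) mod (l + 1) = (i - 1) mod (l + 1)" by (metis mod_add_self2)
  also have "\<dots> = i - 1" using \<open>i \<le> l\<close> by simp
  finally show ?thesis .
qed

theorem lemma3p1:
  fixes l :: nat and b :: "nat \<Rightarrow> int" and \<rho> :: "nat \<Rightarrow> lvec" and \<alpha> :: nat
  assumes fan: "is_tv_fan l b \<rho>"
    and b0: "b 0 < 0"
    and l: "l > 2"
    and alpha: "1 < \<alpha>" "\<alpha> < l" "\<rho> \<alpha> = vneg (\<rho> 0)"
  defines "\<gamma> \<equiv> (\<Sum>i=1..\<alpha>-1. 3 - b i) - 3"
  shows "\<gamma> \<ge> 0 \<and> b 0 + b \<alpha> - \<gamma> \<ge> 0 \<and>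
         (\<forall>R :: lvec. pairing (\<rho> \<alpha>) R = 1 \<longrightarrow>
            pairing (\<rho> (\<alpha> - 1)) R - pairing (\<rho> 1) R = \<gamma>)"
proof -
  have det1: "\<forall>i\<le>l. det2 (\<rho> i) (\<rho> ((i + 1) mod (l + 1))) = 1"
    and brel: "\<forall>i\<le>l. smul (b i) (\<rho> i) = vadd (\<rho> ((i + l) mod (l + 1))) (\<rho> ((i + 1) mod (l + 1)))"
    and ex: "\<exists>\<theta> :: nat \<Rightarrow> real.
        (\<forall>i<l. \<theta> i < \<theta> (Suc i)) \<and> \<theta> l < \<theta> 0 + 2 * pi \<and>
        (\<forall>i\<le>l. \<exists>r>0. real_of_int (fst (\<rho> i)) = r * cos (\<theta> i) \<and>
                        real_of_int (snd (\<rho> i)) = r * sin (\<theta> i))"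
    using fan unfolding is_tv_fan_def smooth_complete_fan_def by blast+
  then obtain \<theta> :: "nat \<Rightarrow> real" where mono: "\<forall>i<l. \<theta> i < \<theta> (Suc i)" and wrap: "\<theta> l < \<theta> 0 + 2 * pi"
    and pol: "\<forall>i\<le>l. \<exists>r>0. real_of_int (fst (\<rho> i)) = r * cos (\<theta> i) \<and>
                        real_of_int (snd (\<rho> i)) = r * sin (\<theta> i)" by blast
  have "\<forall>i. \<exists>r. i \<le> l \<longrightarrow> r > 0 \<and> real_of_int (fst (\<rho> i)) = r * cos (\<theta> i) \<and>
                        real_of_int (snd (\<rho> i)) = r * sin (\<theta> i)" using pol by blast
  from choice[OF this] obtain r where r0: "\<forall>i. i \<le> l \<longrightarrow> r i > 0 \<and> real_of_int (fst (\<rho> i)) = r i * cos (\<theta> i) \<and>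
                        real_of_int (snd (\<rho> i)) = r i * sin (\<theta> i)" by blast
  have r: "\<And>i. i \<le> l \<Longrightarrow> r i > 0 \<and> real_of_int (fst (\<rho> i)) = r i * cos (\<theta> i) \<and>
                        real_of_int (snd (\<rho> i)) = r i * sin (\<theta> i)" using r0 by blast
  have smono: "\<theta> i < \<theta> j" if "i < j" "j \<le> l" for i j
    using that
  proof (induction j)
    case 0 thus ?case by simp
  next
    case (Suc j)
    have m: "\<theta> j < \<theta> (Suc j)" using mono Suc.prems(2) by simp
    show ?case
    proof (cases "i = j")
      case True thus ?thesis using m by simp
    next
      case False
      hence "\<theta> i < \<theta> j" using Suc by simp
      thus ?thesis using m by simp
    qed
  qed
  have wmono: "\<theta> i \<le> \<theta> j" if "i \<le> j" "j \<le> l" for i j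
    using smono[of i j] that by (cases "i = j") auto
  have detf: "real_of_int (det2 (\<rho> i) (\<rho> j)) = r i * r j * sin (\<theta> j - \<theta> i)" if "i \<le> l" "j \<le> l" for i j
    using r[OF that(1)] r[OF that(2)] by (simp add: det2_def sin_diff algebra_simps)
  have dpos: "det2 (\<rho> i) (\<rho> j) > 0" if "i \<le> l" "j \<le> l" "0 < \<theta> j - \<theta> i" "\<theta> j - \<theta> i < pi" for i j
  proof -
    have "r i * r j * sin (\<theta> j - \<theta> i) > 0" using r[OF that(1)] r[OF that(2)] sin_gt_zero[OF that(3,4)] by simp
    thus ?thesis using detf[OF that(1,2)] by linarith
  qed
  have dnn: "det2 (\<rho> i) (\<rho> j) \<ge> 0" if "i \<le> l" "j \<le> l" "0 \<le> \<theta> j - \<theta> i" "\<theta> j - \<theta> i \<le> pi" for i j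
  proof -
    have "r i * r j * sin (\<theta> j - \<theta> i) \<ge> 0" using r[OF that(1)] r[OF that(2)] sin_ge_zero[OF that(3,4)] by simp
    thus ?thesis using detf[OF that(1,2)] by linarith
  qed
  have tha: "\<theta> \<alpha> = \<theta> 0 + pi"
  proof -
    have al: "\<alpha> \<le> l" using alpha by simp
    have "det2 (\<rho> 0) (\<rho> \<alpha>) = 0" using alpha(3) by (simp add: det2_def vneg_def)
    hence "r 0 * r \<alpha> * sin (\<theta> \<alpha> - \<theta> 0) = 0" using detf[of 0 \<alpha>] al by simp
    moreover have "r 0 > 0" "r \<alpha> > 0" using r[of 0] r[OF al] by auto
    ultimately have s0: "sin (\<theta> \<alpha> - \<theta> 0) = 0" by simp
    have s1: "sin (\<theta> \<alpha> - \<theta> 0 - pi) = 0" using s0 by (simp add: sin_diff)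
    have t1: "\<theta> 0 < \<theta> \<alpha>" using smono[of 0 \<alpha>] alpha by simp
    have t2: "\<theta> \<alpha> < \<theta> l" using smono[of \<alpha> l] alpha by simp
    have "\<theta> \<alpha> - \<theta> 0 - pi = 0"
      by (rule sin_eq_0_pi[OF _ _ s1]) (use t1 t2 wrap in linarith)+
    thus ?thesis by simp
  qed
  have dcons: "det2 (\<rho> j) (\<rho> (Suc j)) = 1" if "j < \<alpha>" for j
    using det1[rule_format, of j] that alpha by simp
  have S: "(\<Sum>j<\<alpha>-1. 3 - det2 (\<rho> j) (\<rho> (j+2))) = 3 + det2 (\<rho> 1) (\<rho> (\<alpha>-1))"
  proof (rule hj_sum)
    show "2 \<le> \<alpha>" using alpha by simp
    show "\<forall>j<\<alpha>. det2 (\<rho> j) (\<rho> (Suc j)) = 1" using dcons by blast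
    show "\<rho> \<alpha> = vneg (\<rho> 0)" by (rule alpha(3))
    show "\<forall>j. 0 < j \<longrightarrow> j < \<alpha> \<longrightarrow> 0 < det2 (\<rho> 0) (\<rho> j)"
    proof (intro allI impI)
      fix j assume "0 < j" "j < \<alpha>"
      thus "0 < det2 (\<rho> 0) (\<rho> j)" using smono[of 0 j] smono[of j \<alpha>] alpha tha
        by (intro dpos) auto
    qed
  qed
  have bi: "b (Suc k) = det2 (\<rho> k) (\<rho> (k+2))" if "k < \<alpha> - 1" for k
  proof -
    have "smul (b (Suc k)) (\<rho> (Suc k)) = vadd (\<rho> k) (\<rho> (k+2))"
      using brel[rule_format, of "Suc k"] modl[of "Suc k" l] that alpha by simp
    thus ?thesis using dcons[of k] that by (intro bdet) auto
  qed
  have g: "\<gamma> = det2 (\<rho> 1) (\<rho> (\<alpha>-1))"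
  proof -
    have "(\<Sum>i=1..\<alpha>-1. 3 - b i) = (\<Sum>k<\<alpha>-1. 3 - b (Suc k))"
      using sum.atLeast1_atMost_eq[of "\<lambda>i. 3 - b i"] by simp
    also have "\<dots> = (\<Sum>k<\<alpha>-1. 3 - det2 (\<rho> k) (\<rho> (k+2)))" using bi by simp
    finally show ?thesis using S unfolding \<gamma>_def by simp
  qed
  have gnn: "\<gamma> \<ge> 0" unfolding g using alpha tha wmono[of 1 "\<alpha>-1"] smono[of "\<alpha>-1" \<alpha>] smono[of 0 1]
    by (intro dnn) auto
  have bz: "b 0 = det2 (\<rho> l) (\<rho> 1)"
  proof -
    have "smul (b 0) (\<rho> 0) = vadd (\<rho> l) (\<rho> 1)" using brel[rule_format, of 0] l by simp
    moreover have "det2 (\<rho> l) (\<rho> 0) = 1" using det1[rule_format, of l] by simp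
    ultimately show ?thesis by (rule bdet)
  qed
  have ba: "b \<alpha> = det2 (\<rho> (\<alpha>-1)) (\<rho> (\<alpha>+1))"
  proof -
    have "smul (b \<alpha>) (\<rho> \<alpha>) = vadd (\<rho> (\<alpha>-1)) (\<rho> (\<alpha>+1))"
      using brel[rule_format, of \<alpha>] modl[of \<alpha> l] alpha by simp
    moreover have "det2 (\<rho> (\<alpha>-1)) (\<rho> \<alpha>) = 1" using dcons[of "\<alpha>-1"] alpha by simp
    ultimately show ?thesis by (rule bdet)
  qed
  have d01: "det2 (\<rho> 0) (\<rho> 1) = 1" using dcons[of 0] alpha by simp
  have d0l: "det2 (\<rho> 0) (\<rho> l) = -1"
  proof -
    have "det2 (\<rho> l) (\<rho> 0) = 1" using det1[rule_format, of l] by simp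
    thus ?thesis by (simp add: det2_def algebra_simps)
  qed
  have d0a1: "det2 (\<rho> 0) (\<rho> (\<alpha>+1)) = -1"
  proof -
    have "det2 (\<rho> \<alpha>) (\<rho> (\<alpha>+1)) = 1" using det1[rule_format, of \<alpha>] alpha by simp
    thus ?thesis using alpha(3) by (simp add: det2_def vneg_def algebra_simps)
  qed
  have d0am: "det2 (\<rho> 0) (\<rho> (\<alpha>-1)) = 1"
  proof -
    have "det2 (\<rho> (\<alpha>-1)) (\<rho> \<alpha>) = 1" using dcons[of "\<alpha>-1"] alpha by simp
    thus ?thesis using alpha(3) by (simp add: det2_def vneg_def algebra_simps)
  qed
  have last: "det2 (\<rho> (\<alpha>+1)) (\<rho> l) \<ge> 0"
    using alpha tha wrap wmono[of "\<alpha>+1" l] smono[of \<alpha> "\<alpha>+1"] by (intro dnn) auto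
  have part2: "b 0 + b \<alpha> - \<gamma> \<ge> 0"
    using key[OF d01 d0l d0a1 d0am] last bz ba g by simp
  have part3: "\<forall>R :: lvec. pairing (\<rho> \<alpha>) R = 1 \<longrightarrow>
            pairing (\<rho> (\<alpha> - 1)) R - pairing (\<rho> 1) R = \<gamma>"
  proof (intro allI impI)
    fix R :: lvec assume "pairing (\<rho> \<alpha>) R = 1"
    hence "pairing (\<rho> 0) R = -1" using alpha(3) by (simp add: pairing_def vneg_def)
    thus "pairing (\<rho> (\<alpha> - 1)) R - pairing (\<rho> 1) R = \<gamma>" using key2[OF d01 d0am] g by simp
  qed
  show ?thesis using gnn part2 part3 by blast
qed

end
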